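(* Let $n$ be such that $n/2$ is odd, let $\Omega\subseteq\mathbb{R}^n$ be open, let $v$ be a scalar-valued function on $\Omega$, let $\lambda\in\mathbb{C}\setminus\{0\}$, and let $\underline{f}$ be a vector-valued solution of the Clifford Riccati equation $\partial_{\underline{x}}\underline{f}+\underline{f}^2=v$. Then any scalar-valued solution $\phi$ of the Schrödinger equation $(-\Delta_n-v)\phi=\lambda^2\phi$ can be uniquely represented as $\phi=g+h$, where $g$ and $h$ are $\mathbb{C}_n$-valued solutions of \[\left(\partial_{\underline{x}}-M^{\underline{f}+\lambda ie_N}\right)g=0\quad\text{and}\quad\left(\partial_{\underline{x}}-M^{\underline{f}-\lambda ie_N}\right)h=0\] respectively.
   Context: $\mathbb{R}_{0,n}$ is the real Clifford algebra generated by an orthonormal basis $e_1,\dots,e_n$ of $\mathbb{R}^n$ with relations $e_je_k+e_ke_j=-2\delta_{jk}$; $\mathbb{C}_n=\mathbb{R}_{0,n}\otimes\mathbb{C}$, with $i$ the complex unit. $e_N=e_1e_2\cdots e_n$ is the pseudo-scalar. The Dirac operator is $\partial_{\underline{x}}=\sum_{j=1}^n e_j\partial_{x_j}$, acting from the left; $\Delta_n=-\partial_{\underline{x}}^2$ is the Laplacian. For a function $F$, $M^F$ is right multiplication: $M^Fg=gF$. *)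

theory Defs
  imports "HOL-Analysis.Analysis"
begin

text \<open>Complexified Clifford algebra C_n = R_{0,n} (x) C, with generators e_j indexed by
  a finite linearly ordered type 'n (so n = CARD('n)). An element is a vector of complex
  coefficients indexed by blades A (subsets of 'n), A standing for e_{a1}...e_{ak}, a1<...<ak.\<close>

type_synonym 'n cliff = "complex ^ ('n set)"

text \<open>Sign of e_A e_B = sign * e_{A symdiff B}, using e_j e_k = - e_k e_j (j \<noteq> k), e_j^2 = -1.\<close>
definition blade_sign :: "('n::{finite,linorder}) set \<Rightarrow> 'n set \<Rightarrow> complex" where
  "blade_sign A B = (-1) ^ (card {(a, b). a \<in> A \<and> b \<in> B \<and> b < a} + card (A \<inter> B))"

definition cmul :: "('n::{finite,linorder}) cliff \<Rightarrow> 'n cliff \<Rightarrow> 'n cliff" (infixl "\<odot>" 70) where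
  "u \<odot> w = (\<chi> C. \<Sum>A\<in>UNIV. blade_sign A ((A - C) \<union> (C - A)) * (u $ A) * (w $ ((A - C) \<union> (C - A))))"

definition gen :: "'n::{finite,linorder} \<Rightarrow> 'n cliff" where
  "gen j = (\<chi> A. if A = {j} then 1 else 0)"

definition eN :: "('n::{finite,linorder}) cliff" where
  "eN = (\<chi> A. if A = UNIV then 1 else 0)"

definition scal :: "complex \<Rightarrow> ('n::{finite,linorder}) cliff" where
  "scal c = (\<chi> A. if A = {} then c else 0)"

definition is_vector :: "('n::{finite,linorder}) cliff \<Rightarrow> bool" where
  "is_vector u \<longleftrightarrow> (\<forall>A. card A \<noteq> 1 \<longrightarrow> u $ A = 0)"

definition pd :: "'n::finite \<Rightarrow> (real ^ 'n \<Rightarrow> 'b::real_normed_vector) \<Rightarrow> real ^ 'n \<Rightarrow> 'b" where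
  "pd j F x = frechet_derivative F (at x) (axis j 1)"

definition dirac :: "((real, 'a::{finite,linorder}) vec \<Rightarrow> 'a cliff) \<Rightarrow> (real, 'a) vec \<Rightarrow> 'a cliff" where
  "dirac F x = (\<Sum>j\<in>UNIV. gen j \<odot> pd j F x)"

definition laplacian :: "(real ^ 'n \<Rightarrow> complex) \<Rightarrow> real ^ ('n::finite) \<Rightarrow> complex" where
  "laplacian F x = (\<Sum>j\<in>UNIV. pd j (pd j F) x)"

end

theory Submission
  imports Defs
begin

abbreviation sd :: "'a set \<Rightarrow> 'a set \<Rightarrow> 'a set" where "sd A B \<equiv> (A - B) \<union> (B - A)"

definition sgnf :: "('n::{finite,linorder}) set \<Rightarrow> 'n set \<Rightarrow> complex" where
  "sgnf A B = (\<Prod>a\<in>UNIV. \<Prod>b\<in>UNIV. if a \<in> A \<and> b \<in> B \<and> b \<le> a then -1 else 1)"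

lemma blade_sign_prod: "blade_sign A B = sgnf A B"
proof -
  let ?S = "{(a, b). a \<in> A \<and> b \<in> B \<and> b < a}"
  let ?D = "(\<lambda>a. (a,a)) ` (A \<inter> B)"
  let ?T = "{(a, b). a \<in> A \<and> b \<in> B \<and> b \<le> a}"
  have T: "?T = ?S \<union> ?D" by (auto simp: order_le_less)
  have dj: "?S \<inter> ?D = {}" by auto
  have cD: "card ?D = card (A \<inter> B)" by (rule card_image) (auto simp: inj_on_def)
  have cT: "card ?T = card ?S + card (A \<inter> B)"
    unfolding T by (subst card_Un_disjoint) (use dj cD in auto)
  have "sgnf A B = (\<Prod>p\<in>UNIV \<times> UNIV. if p \<in> ?T then (-1::complex) else 1)"
    unfolding sgnf_def prod.cartesian_product by (intro prod.cong refl) (auto split: prod.splits)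
  also have "\<dots> = (\<Prod>p\<in>?T. (-1::complex))"
    by (subst prod.If_cases) (simp_all add: Int_def)
  also have "\<dots> = (-1) ^ card ?T" by simp
  finally show ?thesis unfolding blade_sign_def cT by simp
qed

lemma sgnf_sd_left: "sgnf (sd A B) C = sgnf A C * sgnf B C"
  unfolding sgnf_def prod.distrib[symmetric]
  by (intro prod.cong refl) auto

lemma sgnf_sd_right: "sgnf A (sd B C) = sgnf A B * sgnf A C"
  unfolding sgnf_def prod.distrib[symmetric]
  by (intro prod.cong refl) auto

lemma sgnf_sq: "sgnf A B * sgnf A B = 1"
  unfolding sgnf_def prod.distrib[symmetric]
  by (intro prod.neutral ballI) auto

lemma sgnf_empty[simp]: "sgnf {} B = 1" "sgnf A {} = 1"
  unfolding sgnf_def by auto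

lemma cmul_nth: "(u \<odot> w) $ C = (\<Sum>A\<in>UNIV. sgnf A (sd A C) * u $ A * w $ (sd A C))"
  unfolding cmul_def blade_sign_prod by simp

lemma sd_sd[simp]: "sd B (sd B a) = a" by auto

lemma sum_sd_reindex: "(\<Sum>A\<in>UNIV. F A) = (\<Sum>C\<in>UNIV. F (sd B C))"
  by (rule sum.reindex_bij_witness[of _ "sd B" "sd B"]) auto

lemma sgn_assoc: "sgnf (sd B C) E * sgnf B C = sgnf B (sd C E) * sgnf C E"
  unfolding sgnf_sd_left sgnf_sd_right by (simp add: algebra_simps)

lemma cmul_assoc: "(u \<odot> w) \<odot> z = u \<odot> (w \<odot> z)"
proof (subst vec_eq_iff, intro allI)
  fix D
  have "((u \<odot> w) \<odot> z) $ D = (\<Sum>A\<in>UNIV. \<Sum>B\<in>UNIV. sgnf A (sd A D) * sgnf B (sd B A) * u$B * w$(sd B A) * z$(sd A D))"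
    unfolding cmul_nth by (simp add: sum_distrib_left sum_distrib_right algebra_simps)
  also have "\<dots> = (\<Sum>B\<in>UNIV. \<Sum>A\<in>UNIV. sgnf A (sd A D) * sgnf B (sd B A) * u$B * w$(sd B A) * z$(sd A D))"
    by (rule sum.swap)
  also have "\<dots> = (\<Sum>B\<in>UNIV. \<Sum>C\<in>UNIV. sgnf (sd B C) (sd (sd B C) D) * sgnf B (sd B (sd B C)) * u$B * w$(sd B (sd B C)) * z$(sd (sd B C) D))"
    apply (rule sum.cong[OF refl])
    subgoal for B by (rule sum.reindex_bij_witness[of _ "sd B" "sd B"]) auto
    done
  also have "\<dots> = (\<Sum>B\<in>UNIV. \<Sum>C\<in>UNIV. sgnf B (sd B D) * sgnf C (sd C (sd B D)) * u$B * w$C * z$(sd C (sd B D)))"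
  proof (intro sum.cong refl)
    fix B C :: "'a set"
    have e1: "sd B (sd B C) = C" by auto
    have e2: "sd (sd B C) D = sd C (sd B D)" by auto
    have e3: "sd C (sd C (sd B D)) = sd B D" by auto
    have "sgnf (sd B C) (sd C (sd B D)) * sgnf B C = sgnf B (sd B D) * sgnf C (sd C (sd B D))"
      using sgn_assoc[of B C "sd C (sd B D)"] unfolding e3 .
    then show "sgnf (sd B C) (sd (sd B C) D) * sgnf B (sd B (sd B C)) * u$B * w$(sd B (sd B C)) * z$(sd (sd B C) D)
        = sgnf B (sd B D) * sgnf C (sd C (sd B D)) * u$B * w$C * z$(sd C (sd B D))"
      unfolding e1 e2 by simp
  qed
  also have "\<dots> = (u \<odot> (w \<odot> z)) $ D"
    unfolding cmul_nth by (simp add: sum_distrib_left sum_distrib_right algebra_simps)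
  finally show "((u \<odot> w) \<odot> z) $ D = (u \<odot> (w \<odot> z)) $ D" .
qed


lemma cmul_add_left: "(a + b) \<odot> c = a \<odot> c + b \<odot> c"
  by (simp add: vec_eq_iff cmul_nth sum.distrib[symmetric] algebra_simps)
lemma cmul_add_right: "c \<odot> (a + b) = c \<odot> a + c \<odot> b"
  by (simp add: vec_eq_iff cmul_nth sum.distrib[symmetric] algebra_simps)
lemma cmul_scaleR_left: "(r *\<^sub>R a) \<odot> c = r *\<^sub>R (a \<odot> c)"
  by (simp add: vec_eq_iff cmul_nth scaleR_sum_right)
lemma cmul_scaleR_right: "c \<odot> (r *\<^sub>R a) = r *\<^sub>R (c \<odot> a)"
  by (simp add: vec_eq_iff cmul_nth scaleR_sum_right)

lemma bb_cmul: "bounded_bilinear ((\<odot>) :: ('n::{finite,linorder}) cliff \<Rightarrow> _)"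
  unfolding bilinear_conv_bounded_bilinear[symmetric] bilinear_def linear_iff
  by (simp add: cmul_add_left cmul_add_right cmul_scaleR_left cmul_scaleR_right)

lemmas cmul_zero_left = bounded_bilinear.zero_left[OF bb_cmul]
lemmas cmul_zero_right = bounded_bilinear.zero_right[OF bb_cmul]
lemmas cmul_diff_left = bounded_bilinear.diff_left[OF bb_cmul]
lemmas cmul_diff_right = bounded_bilinear.diff_right[OF bb_cmul]
lemmas cmul_minus_left = bounded_bilinear.minus_left[OF bb_cmul]
lemmas cmul_minus_right = bounded_bilinear.minus_right[OF bb_cmul]
lemmas cmul_sum_left = bounded_bilinear.sum_left[OF bb_cmul]
lemmas cmul_sum_right = bounded_bilinear.sum_right[OF bb_cmul]

lemma sum_delta_mult: fixes B :: "('n::finite) set" shows "(\<Sum>A\<in>UNIV. F A * (if A = B then c else 0) * G A) = F B * c * (G B :: complex)"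
proof -
  have "\<And>A. F A * (if A = B then c else 0) * G A = (if A = B then F B * c * G B else 0)" by auto
  then show ?thesis by simp
qed

lemma scal_left: "scal c \<odot> u = (\<chi> A. c * u $ A)"
  by (simp add: vec_eq_iff cmul_nth scal_def sum_delta_mult)

lemma sum_delta_mult2: fixes B :: "('n::finite) set" shows "(\<Sum>A\<in>UNIV. F A * G A * (if A = B then c else 0)) = F B * G B * (c::complex)"
proof -
  have "\<And>A. F A * G A * (if A = B then c else 0) = (if A = B then F B * G B * c else 0)" by auto
  then show ?thesis by simp
qed

lemma scal_right: "u \<odot> scal c = (\<chi> A. u $ A * c)"
proof -
  have e: "(if sd A C = {} then c else 0) = (if A = C then c else 0)" for A C :: "'a set" by auto
  show ?thesis
    unfolding vec_eq_iff cmul_nth scal_def vec_lambda_beta e sum_delta_mult2 by simp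
qed

lemma scal_comm: "scal c \<odot> u = u \<odot> scal c"
  by (simp add: scal_left scal_right mult.commute)
lemma scal_add: "scal (a + b) = scal a + scal b"
  by (simp add: vec_eq_iff scal_def)
lemma scal_diff: "scal (a - b) = scal a - scal b"
  by (simp add: vec_eq_iff scal_def)
lemma scal_minus: "scal (- a) = - scal a"
  by (simp add: vec_eq_iff scal_def)
lemma scal_zero[simp]: "scal 0 = 0"
  by (simp add: vec_eq_iff scal_def)
lemma scal_mult: "scal a \<odot> scal b = scal (a * b)"
  unfolding scal_left by (simp add: vec_eq_iff scal_def)
lemma scal_one: "scal 1 \<odot> u = u"
  by (simp add: vec_eq_iff scal_left)
lemma scal_one_right: "u \<odot> scal 1 = u"
  by (simp add: vec_eq_iff scal_right)
lemma scal_sum: "scal (\<Sum>i\<in>S. f i) = (\<Sum>i\<in>S. scal (f i))"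
  by (induction S rule: infinite_finite_induct) (simp_all add: scal_add)

lemma linear_scal: "linear scal"
  unfolding linear_iff by (simp add: vec_eq_iff scal_def)
lemma bl_scal: "bounded_linear scal"
  using linear_scal linear_conv_bounded_linear by blast

lemma prod_sign: "finite S \<Longrightarrow> (\<Prod>x\<in>S. if P x then -1 else (1::complex)) = (-1) ^ card {x\<in>S. P x}"
  by (subst prod.If_cases) (simp_all add: Int_def)

lemma sgnf_single: "sgnf {j} {k} = (if k \<le> j then -1 else 1)"
proof -
  have i: "(\<Prod>b\<in>UNIV. if a \<in> {j} \<and> b \<in> {k} \<and> b \<le> a then -1 else (1::complex)) = (if a = j then (if k \<le> j then -1 else 1) else 1)" for a
  proof (cases "a = j \<and> k \<le> j")
    case True
    then have "(\<Prod>b\<in>UNIV. if a \<in> {j} \<and> b \<in> {k} \<and> b \<le> a then -1 else (1::complex)) = (\<Prod>b\<in>UNIV. if b = k then -1 else 1)"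
      by (intro prod.cong) auto
    then show ?thesis using True by (simp add: prod.delta)
  next
    case False
    then have "(\<Prod>b\<in>UNIV. if a \<in> {j} \<and> b \<in> {k} \<and> b \<le> a then -1 else (1::complex)) = 1"
      by (intro prod.neutral) auto
    then show ?thesis using False by auto
  qed
  show ?thesis unfolding sgnf_def i by (simp add: prod.delta)
qed

lemma gen_gen: "gen j \<odot> gen k = (\<chi> C. if C = sd {j} {k} then sgnf {j} {k} else 0)"
proof -
  have e: "sd {j} C = {k} \<longleftrightarrow> C = sd {j} {k}" for C by auto
  show ?thesis
    by (simp add: vec_eq_iff cmul_nth gen_def sum_delta_mult e)
qed

lemma gen_anti: "gen j \<odot> gen k + gen k \<odot> gen j = scal (if j = k then -2 else 0)"
proof (cases "j = k")
  case True then show ?thesis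
    by (simp add: gen_gen sgnf_single vec_eq_iff scal_def)
next
  case False
  then have "sgnf {j} {k} + sgnf {k} {j} = 0" by (auto simp: sgnf_single)
  moreover have "sd {j} {k} = sd {k} {j}" by auto
  ultimately show ?thesis using False
    by (simp add: gen_gen vec_eq_iff scal_def)
qed


lemma eN_right: "(u \<odot> eN) $ C = sgnf (- C) UNIV * u $ (- C)"
proof -
  have e: "(if sd A C = UNIV then 1 else 0) = (if A = - C then (1::complex) else 0)" for A by auto
  have e2: "sd (- C) C = UNIV" by auto
  show ?thesis unfolding cmul_nth eN_def vec_lambda_beta e sum_delta_mult2 e2 by simp
qed

lemma eN_left: "(eN \<odot> u) $ C = sgnf UNIV (- C) * u $ (- C)"
proof -
  have e2: "sd UNIV C = - C" by auto
  show ?thesis unfolding cmul_nth eN_def vec_lambda_beta sum_delta_mult e2 by simp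
qed

lemma eN_eN: "(eN :: ('n::{finite,linorder}) cliff) \<odot> eN = scal (sgnf (UNIV :: 'n set) UNIV)"
  unfolding vec_eq_iff eN_right by (auto simp: eN_def scal_def)

lemma card_lower_pairs:
  "2 * card {(a, b). (b::'n::{finite,linorder}) < a} + CARD('n) = CARD('n) * CARD('n)"
proof -
  let ?P = "{(a, b). (b::'n) < a}"
  let ?Q = "(\<lambda>(a,b). (b,a)) ` ?P"
  let ?D = "(\<lambda>a. (a,a)) ` (UNIV :: 'n set)"
  have cQ: "card ?Q = card ?P" by (rule card_image) (auto simp: inj_on_def)
  have cD: "card ?D = CARD('n)" by (rule card_image) (auto simp: inj_on_def)
  have U: "(UNIV :: ('n \<times> 'n) set) = ?P \<union> ?Q \<union> ?D"
    by (auto simp: image_iff)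
  have "CARD('n \<times> 'n) = card (?P \<union> ?Q \<union> ?D)" by (simp only: U[symmetric])
  also have "\<dots> = card ?P + card ?Q + card ?D"
    by (subst card_Un_disjoint, simp, simp, fastforce)+ simp
  finally show ?thesis using cQ cD by (simp add: card_prod)
qed

lemma sgnf_UNIV_UNIV:
  assumes "even CARD('n)" "odd (CARD('n) div 2)"
  shows "sgnf (UNIV :: ('n::{finite,linorder}) set) UNIV = -1"
proof -
  define K where "K = card {(a, b). (b::'n) < a}"
  obtain m where m: "CARD('n) = 2 * m" using assms(1) by blast
  have om: "odd m" using assms(2) m by simp
  have "2 * K + 2 * m = 2 * m * (2 * m)" using card_lower_pairs[where 'n='n] m K_def by simp
  then have "K + m = 2 * (m * m)" by (simp add: algebra_simps)
  then have "even (K + m)" by simp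
  then have "odd K" using om by simp
  then have "odd (K + CARD('n))" using m by simp
  moreover have "card {(a, b). a \<in> (UNIV::'n set) \<and> b \<in> UNIV \<and> b < a} = K" by (simp add: K_def)
  ultimately show ?thesis unfolding blade_sign_prod[symmetric] blade_sign_def
    by simp
qed

lemma sgnf_single_UNIV:
  assumes "even CARD('n)"
  shows "sgnf {j :: 'n::{finite,linorder}} UNIV * sgnf UNIV {j} = -1"
proof -
  have c1: "card {(a, b). a \<in> {j} \<and> b \<in> (UNIV::'n set) \<and> b < a} = card {b. b < j}"
  proof -
    have "{(a, b). a \<in> {j} \<and> b \<in> (UNIV::'n set) \<and> b < a} = (\<lambda>b. (j,b)) ` {b. b < j}" by auto
    then show ?thesis by (simp add: card_image inj_on_def)
  qed
  have c2: "card {(a, b). a \<in> (UNIV::'n set) \<and> b \<in> {j} \<and> b < a} = card {a. j < a}"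
  proof -
    have "{(a, b). a \<in> (UNIV::'n set) \<and> b \<in> {j} \<and> b < a} = (\<lambda>a. (a,j)) ` {a. j < a}" by auto
    then show ?thesis by (simp add: card_image inj_on_def)
  qed
  have U: "(UNIV::'n set) = {b. b < j} \<union> {a. j < a} \<union> {j}" by auto
  have "CARD('n) = card ({b. b < j} \<union> {a. j < a} \<union> {j})" by (simp only: U[symmetric])
  also have "\<dots> = card {b. b < j} + card {a. j < a} + 1"
    by (subst card_Un_disjoint, simp, simp, fastforce)+ simp
  finally have "odd (card {b. b < j} + card {a. j < a})" using assms by simp
  then have "odd ((card {b. b < j} + 1) + (card {a. j < a} + 1))" by simp
  then show ?thesis unfolding blade_sign_prod[symmetric] blade_sign_def c1 c2
    by (simp add: power_add[symmetric])
qed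

lemma vector_eN_anti:
  assumes "even CARD('n)" "is_vector (u :: ('n::{finite,linorder}) cliff)"
  shows "u \<odot> eN = - (eN \<odot> u)"
proof (subst vec_eq_iff, intro allI)
  fix C :: "'n set"
  show "(u \<odot> eN) $ C = (- (eN \<odot> u)) $ C"
  proof (cases "card (- C) = 1")
    case True
    then obtain j where j: "- C = {j}" by (auto simp: card_Suc_eq)
    have "sgnf {j} UNIV = sgnf {j} UNIV * (sgnf UNIV {j} * sgnf UNIV {j})"
      by (simp add: sgnf_sq)
    also have "\<dots> = (sgnf {j} UNIV * sgnf UNIV {j}) * sgnf UNIV {j}" by (simp add: mult.assoc)
    also have "\<dots> = - sgnf UNIV {j}" using sgnf_single_UNIV[OF assms(1), of j] by simp
    finally have "sgnf {j} UNIV = - sgnf UNIV {j}" .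
    then show ?thesis by (simp add: eN_right eN_left j)
  next
    case False
    then have "u $ (- C) = 0" using assms(2) unfolding is_vector_def by blast
    then show ?thesis by (simp add: eN_right eN_left)
  qed
qed

lemma young_half:
  fixes \<phi> :: "(real, 'n::finite) vec \<Rightarrow> complex"
  assumes "open \<Omega>" "x \<in> \<Omega>" "\<forall>y\<in>\<Omega>. \<phi> differentiable at y" "pd j \<phi> differentiable at x" "\<epsilon> > 0"
  shows "\<exists>\<delta>>0. \<forall>t. 0 < t \<and> t < \<delta> \<longrightarrow>
    norm (\<phi> (x + t *\<^sub>R axis j 1 + t *\<^sub>R axis k 1) - \<phi> (x + t *\<^sub>R axis j 1) - \<phi> (x + t *\<^sub>R axis k 1) + \<phi> x
          - (t * t) *\<^sub>R pd k (pd j \<phi>) x) \<le> \<epsilon> * (t * t)"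
proof -
  obtain r where r: "r > 0" "ball x r \<subseteq> \<Omega>" using assms(1,2) open_contains_ball by blast
  define \<psi> where "\<psi> = pd j \<phi>"
  define L where "L = frechet_derivative \<psi> (at x)"
  have dpsi: "(\<psi> has_derivative L) (at x)"
    using assms(4) unfolding \<psi>_def L_def frechet_derivative_works .
  then obtain d where d: "d > 0" "\<forall>y. norm (y - x) < d \<longrightarrow> norm (\<psi> y - \<psi> x - L (y - x)) \<le> (\<epsilon>/3) * norm (y - x)"
    using assms(5) unfolding has_derivative_at_alt by (meson divide_pos_pos zero_less_numeral)
  have blL: "bounded_linear L" using dpsi has_derivative_bounded_linear by blast
  define c where "c = pd k (pd j \<phi>) x"
  have c: "c = L (axis k 1)" unfolding c_def pd_def L_def \<psi>_def ..
  define u :: "(real, 'n) vec" where "u = axis j 1"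
  define w :: "(real, 'n) vec" where "w = axis k 1"
  show ?thesis
  proof (intro exI[of _ "min (r/2) (d/2)"] conjI allI impI)
    show "0 < min (r/2) (d/2)" using r d by simp
    fix t :: real assume t: "0 < t \<and> t < min (r/2) (d/2)"
    define p1 where "p1 s = x + s *\<^sub>R u + t *\<^sub>R w" for s
    define p2 where "p2 s = x + s *\<^sub>R u" for s
    define G where "G s = \<phi> (p1 s) - \<phi> (p2 s) - (s * t) *\<^sub>R c" for s
    define G' where "G' s = (\<lambda>h::real. h *\<^sub>R (\<psi> (p1 s) - \<psi> (p2 s) - t *\<^sub>R c))" for s
    have n1: "norm (p1 s - x) \<le> 2 * t" if "s \<in> {0..t}" for s
    proof -
      have "p1 s - x = s *\<^sub>R u + t *\<^sub>R w" by (simp add: p1_def)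
      then have "norm (p1 s - x) \<le> norm (s *\<^sub>R u) + norm (t *\<^sub>R w)"
        by (metis norm_triangle_ineq)
      also have "\<dots> \<le> 2 * t" using that t by (simp add: u_def w_def)
      finally show ?thesis .
    qed
    have n2: "norm (p2 s - x) \<le> t" if "s \<in> {0..t}" for s
      using that by (simp add: p2_def u_def)
    have in1: "p1 s \<in> \<Omega>" if "s \<in> {0..t}" for s
    proof -
      have "dist x (p1 s) < r" using n1[OF that] t by (simp add: dist_norm norm_minus_commute)
      then show ?thesis using r(2) by (simp add: subset_iff)
    qed
    have in2: "p2 s \<in> \<Omega>" if "s \<in> {0..t}" for s
    proof -
      have "dist x (p2 s) < r" using n2[OF that] t by (simp add: dist_norm norm_minus_commute)
      then show ?thesis using r(2) by (simp add: subset_iff)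
    qed
    have dphi: "(\<phi> has_derivative frechet_derivative \<phi> (at y)) (at y)" if "y \<in> \<Omega>" for y
      using assms(3) that frechet_derivative_works by blast
    have dcomp: "((\<lambda>s. \<phi> (q s)) has_derivative (\<lambda>h. h *\<^sub>R \<psi> (q s))) (at s)"
      if "(q has_derivative (\<lambda>h. h *\<^sub>R u)) (at s)" "q s \<in> \<Omega>" for q s
    proof -
      have "((\<lambda>s. \<phi> (q s)) has_derivative (\<lambda>h. frechet_derivative \<phi> (at (q s)) (h *\<^sub>R u))) (at s)"
        by (rule has_derivative_compose[OF that(1) dphi[OF that(2)]])
      moreover have "bounded_linear (frechet_derivative \<phi> (at (q s)))"
        using dphi[OF that(2)] has_derivative_bounded_linear by blast
      ultimately show ?thesis
        by (simp add: linear_cmul[OF bounded_linear.linear] \<psi>_def pd_def u_def)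
    qed
    have dG: "(G has_derivative G' s) (at s)" if "s \<in> {0..t}" for s
    proof -
      have a1: "(p1 has_derivative (\<lambda>h. h *\<^sub>R u)) (at s)"
        unfolding p1_def by (auto intro!: derivative_eq_intros)
      have a2: "(p2 has_derivative (\<lambda>h. h *\<^sub>R u)) (at s)"
        unfolding p2_def by (auto intro!: derivative_eq_intros)
      have a3: "((\<lambda>s. (s * t) *\<^sub>R c) has_derivative (\<lambda>h. (h * t) *\<^sub>R c)) (at s)"
        by (auto intro!: derivative_eq_intros)
      have "(G has_derivative (\<lambda>h. h *\<^sub>R \<psi> (p1 s) - h *\<^sub>R \<psi> (p2 s) - (h * t) *\<^sub>R c)) (at s)"
        unfolding G_def
        by (intro has_derivative_diff dcomp[OF a1 in1[OF that]] dcomp[OF a2 in2[OF that]] a3)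
      then show ?thesis
        by (rule has_derivative_eq_rhs) (auto simp: G'_def algebra_simps fun_eq_iff)
    qed
    have cont: "continuous_on {0..t} G"
      using dG has_derivative_continuous continuous_at_imp_continuous_on by blast
    have "\<exists>s\<in>{0<..<t}. norm (G t - G 0) \<le> norm (G' s (t - 0))"
      by (rule mvt_general) (use t cont dG in auto)
    then obtain s where s: "s \<in> {0<..<t}" "norm (G t - G 0) \<le> norm (G' s (t - 0))" by blast
    have s01: "s \<in> {0..t}" using s by auto
    have L1: "norm (\<psi> (p1 s) - \<psi> x - L (p1 s - x)) \<le> (\<epsilon>/3) * norm (p1 s - x)"
      using d(2) n1[OF s01] t by auto
    have L2: "norm (\<psi> (p2 s) - \<psi> x - L (p2 s - x)) \<le> (\<epsilon>/3) * norm (p2 s - x)"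
      using d(2) n2[OF s01] t by auto
    have Ldiff: "L (p1 s - x) - L (p2 s - x) = t *\<^sub>R c"
      unfolding c p1_def p2_def w_def
      by (simp add: linear_diff[OF bounded_linear.linear[OF blL], symmetric] linear_add[OF bounded_linear.linear[OF blL]] linear_cmul[OF bounded_linear.linear[OF blL]])
    have eqn: "\<psi> (p1 s) - \<psi> (p2 s) - t *\<^sub>R c
        = (\<psi> (p1 s) - \<psi> x - L (p1 s - x)) - (\<psi> (p2 s) - \<psi> x - L (p2 s - x))"
      using Ldiff by (simp add: algebra_simps)
    have "norm (\<psi> (p1 s) - \<psi> (p2 s) - t *\<^sub>R c)
        \<le> norm (\<psi> (p1 s) - \<psi> x - L (p1 s - x)) + norm (\<psi> (p2 s) - \<psi> x - L (p2 s - x))"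
      unfolding eqn by (rule norm_triangle_ineq4)
    then have "norm (\<psi> (p1 s) - \<psi> (p2 s) - t *\<^sub>R c)
        \<le> (\<epsilon>/3) * norm (p1 s - x) + (\<epsilon>/3) * norm (p2 s - x)"
      using L1 L2 by linarith
    also have "\<dots> \<le> (\<epsilon>/3) * (2 * t) + (\<epsilon>/3) * t"
      using n1[OF s01] n2[OF s01] assms(5) by (intro add_mono mult_left_mono) auto
    finally have B: "norm (\<psi> (p1 s) - \<psi> (p2 s) - t *\<^sub>R c) \<le> \<epsilon> * t" by simp
    have "norm (G t - G 0) \<le> t * norm (\<psi> (p1 s) - \<psi> (p2 s) - t *\<^sub>R c)"
      using s(2) t by (simp add: G'_def)
    also have "\<dots> \<le> t * (\<epsilon> * t)" using B t by (intro mult_left_mono) auto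
    finally have "norm (G t - G 0) \<le> \<epsilon> * (t * t)" by (simp add: algebra_simps)
    moreover have "G t - G 0 = \<phi> (x + t *\<^sub>R axis j 1 + t *\<^sub>R axis k 1) - \<phi> (x + t *\<^sub>R axis j 1)
          - \<phi> (x + t *\<^sub>R axis k 1) + \<phi> x - (t * t) *\<^sub>R pd k (pd j \<phi>) x"
      unfolding G_def p1_def p2_def u_def w_def c_def by simp
    ultimately show "norm (\<phi> (x + t *\<^sub>R axis j 1 + t *\<^sub>R axis k 1) - \<phi> (x + t *\<^sub>R axis j 1) - \<phi> (x + t *\<^sub>R axis k 1) + \<phi> x
          - (t * t) *\<^sub>R pd k (pd j \<phi>) x) \<le> \<epsilon> * (t * t)" by simp
  qed
qed

lemma pd_swap:
  fixes \<phi> :: "(real, 'n::finite) vec \<Rightarrow> complex"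
  assumes "open \<Omega>" "x \<in> \<Omega>" "\<forall>y\<in>\<Omega>. \<phi> differentiable at y"
    "pd j \<phi> differentiable at x" "pd k \<phi> differentiable at x"
  shows "pd k (pd j \<phi>) x = pd j (pd k \<phi>) x"
proof (rule ccontr)
  let ?a = "pd k (pd j \<phi>) x" and ?b = "pd j (pd k \<phi>) x"
  assume ne: "?a \<noteq> ?b"
  define \<epsilon> where "\<epsilon> = norm (?a - ?b) / 4"
  have ep: "\<epsilon> > 0" using ne by (simp add: \<epsilon>_def)
  obtain d1 where d1: "d1 > 0" "\<forall>t. 0 < t \<and> t < d1 \<longrightarrow>
    norm (\<phi> (x + t *\<^sub>R axis j 1 + t *\<^sub>R axis k 1) - \<phi> (x + t *\<^sub>R axis j 1) - \<phi> (x + t *\<^sub>R axis k 1) + \<phi> x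
          - (t * t) *\<^sub>R ?a) \<le> \<epsilon> * (t * t)"
    using young_half[OF assms(1,2,3,4) ep, of k] by blast
  obtain d2 where d2: "d2 > 0" "\<forall>t. 0 < t \<and> t < d2 \<longrightarrow>
    norm (\<phi> (x + t *\<^sub>R axis k 1 + t *\<^sub>R axis j 1) - \<phi> (x + t *\<^sub>R axis k 1) - \<phi> (x + t *\<^sub>R axis j 1) + \<phi> x
          - (t * t) *\<^sub>R ?b) \<le> \<epsilon> * (t * t)"
    using young_half[OF assms(1,2,3,5) ep, of j] by blast
  define t where "t = min d1 d2 / 2"
  have t: "0 < t" "t < d1" "t < d2" using d1 d2 by (auto simp: t_def)
  define D where "D = \<phi> (x + t *\<^sub>R axis j 1 + t *\<^sub>R axis k 1) - \<phi> (x + t *\<^sub>R axis j 1) - \<phi> (x + t *\<^sub>R axis k 1) + \<phi> x"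
  have e: "x + t *\<^sub>R axis k 1 + t *\<^sub>R axis j 1 = x + t *\<^sub>R axis j 1 + t *\<^sub>R axis k (1::real)"
    by (simp add: algebra_simps)
  have h1: "norm (D - (t * t) *\<^sub>R ?a) \<le> \<epsilon> * (t * t)" using d1(2) t unfolding D_def by blast
  have eD: "\<phi> (x + t *\<^sub>R axis j 1 + t *\<^sub>R axis k 1) - \<phi> (x + t *\<^sub>R axis k 1) - \<phi> (x + t *\<^sub>R axis j 1) + \<phi> x = D"
    unfolding D_def by (simp add: algebra_simps)
  have h2: "norm (D - (t * t) *\<^sub>R ?b) \<le> \<epsilon> * (t * t)"
    using d2(2)[rule_format, of t] t unfolding e eD by simp
  have "(t * t) *\<^sub>R (?a - ?b) = (D - (t * t) *\<^sub>R ?b) - (D - (t * t) *\<^sub>R ?a)"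
    by (simp add: algebra_simps)
  then have "norm ((t * t) *\<^sub>R (?a - ?b)) \<le> 2 * \<epsilon> * (t * t)"
    using h1 h2 norm_triangle_ineq4[of "D - (t * t) *\<^sub>R ?b" "D - (t * t) *\<^sub>R ?a"] by simp
  moreover have "norm ((t * t) *\<^sub>R (?a - ?b)) = (t * t) * norm (?a - ?b)"
    using t by simp
  ultimately have "(t * t) * norm (?a - ?b) \<le> (t * t) * (norm (?a - ?b) / 2)"
    by (simp add: \<epsilon>_def)
  then have "norm (?a - ?b) \<le> norm (?a - ?b) / 2" using t by (simp add: mult_le_cancel_left_pos)
  then show False using ne by simp
qed

lemma scal_pull: "u \<odot> (scal c \<odot> w) = scal c \<odot> (u \<odot> w)"
  by (metis cmul_assoc scal_comm)

lemma scal_scal: "scal a \<odot> (scal b \<odot> w) = scal (a * b) \<odot> w"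
  by (metis cmul_assoc scal_mult)

lemma double_sum_gen:
  fixes b :: "'n::{finite,linorder} \<Rightarrow> 'n \<Rightarrow> complex"
  assumes sym: "\<And>k j. b k j = b j k"
  shows "(\<Sum>k\<in>UNIV. gen k \<odot> (\<Sum>j\<in>UNIV. gen j \<odot> scal (b k j))) = scal (- (\<Sum>k\<in>UNIV. b k k))"
proof -
  define S where "S = (\<Sum>k\<in>UNIV. \<Sum>j\<in>UNIV. (gen k \<odot> gen j) \<odot> scal (b k j))"
  have S1: "(\<Sum>k\<in>UNIV. gen k \<odot> (\<Sum>j\<in>UNIV. gen j \<odot> scal (b k j))) = S"
    unfolding S_def by (simp add: cmul_sum_right cmul_assoc)
  have "S = (\<Sum>j\<in>UNIV. \<Sum>k\<in>UNIV. (gen k \<odot> gen j) \<odot> scal (b k j))"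
    unfolding S_def by (rule sum.swap)
  also have "\<dots> = (\<Sum>k\<in>UNIV. \<Sum>j\<in>UNIV. (gen j \<odot> gen k) \<odot> scal (b k j))"
    by (simp add: sym)
  finally have S2: "S = \<dots>" .
  have "S + S = (\<Sum>k\<in>UNIV. \<Sum>j\<in>UNIV. (gen k \<odot> gen j + gen j \<odot> gen k) \<odot> scal (b k j))"
    by (subst S2) (simp add: S_def sum.distrib[symmetric] cmul_add_left)
  also have "\<dots> = (\<Sum>k\<in>UNIV. \<Sum>j\<in>UNIV. scal (if k = j then -2 * b k j else 0))"
    by (simp add: gen_anti scal_mult if_distrib[where f="\<lambda>z. z * _"] cong: if_cong)
  also have "\<dots> = (\<Sum>k\<in>UNIV. scal (-2 * b k k))"
    by (simp add: if_distrib[of scal] cong: if_cong)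
  also have "\<dots> = scal (- (\<Sum>k\<in>UNIV. b k k)) + scal (- (\<Sum>k\<in>UNIV. b k k))"
    by (simp add: scal_sum[symmetric] scal_add[symmetric] sum_distrib_left[symmetric] sum_negf[symmetric])
       (simp add: sum_distrib_left sum_negf)
  finally have "(2::real) *\<^sub>R S = (2::real) *\<^sub>R scal (- (\<Sum>k\<in>UNIV. b k k))"
    by (simp add: scaleR_2)
  then show ?thesis using S1 by simp
qed


lemma DX_alg:
  fixes a :: "'n::{finite,linorder} \<Rightarrow> complex" and b :: "'n \<Rightarrow> 'n \<Rightarrow> complex"
    and F :: "'n cliff" and F' :: "'n \<Rightarrow> 'n cliff"
  assumes sym: "\<And>k j. b k j = b j k"
    and ric: "(\<Sum>k\<in>UNIV. gen k \<odot> F' k) + F \<odot> F = scal vv"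
    and sch: "- (\<Sum>k\<in>UNIV. b k k) - vv * p = lam\<^sup>2 * p"
  shows "(\<Sum>k\<in>UNIV. gen k \<odot> ((\<Sum>j\<in>UNIV. gen j \<odot> scal (b k j)) - (scal (a k) \<odot> F + scal p \<odot> F' k)))
       = scal (lam\<^sup>2 * p) - ((\<Sum>j\<in>UNIV. gen j \<odot> scal (a j)) - scal p \<odot> F) \<odot> F"
proof -
  define P where "P = (\<Sum>j\<in>UNIV. gen j \<odot> scal (a j))"
  have e1: "(\<Sum>k\<in>UNIV. gen k \<odot> (scal (a k) \<odot> F)) = P \<odot> F"
    unfolding P_def by (simp add: cmul_sum_left cmul_assoc)
  have e2: "(\<Sum>k\<in>UNIV. gen k \<odot> (scal p \<odot> F' k)) = scal p \<odot> (scal vv - F \<odot> F)"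
  proof -
    have "(\<Sum>k\<in>UNIV. gen k \<odot> (scal p \<odot> F' k)) = scal p \<odot> (\<Sum>k\<in>UNIV. gen k \<odot> F' k)"
      by (simp add: scal_pull cmul_sum_right)
    also have "(\<Sum>k\<in>UNIV. gen k \<odot> F' k) = scal vv - F \<odot> F" using ric by (simp add: algebra_simps)
    finally show ?thesis .
  qed
  have "(\<Sum>k\<in>UNIV. gen k \<odot> ((\<Sum>j\<in>UNIV. gen j \<odot> scal (b k j)) - (scal (a k) \<odot> F + scal p \<odot> F' k)))
      = (\<Sum>k\<in>UNIV. gen k \<odot> (\<Sum>j\<in>UNIV. gen j \<odot> scal (b k j))) - (\<Sum>k\<in>UNIV. gen k \<odot> (scal (a k) \<odot> F))
        - (\<Sum>k\<in>UNIV. gen k \<odot> (scal p \<odot> F' k))"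
    by (simp add: cmul_diff_right cmul_add_right sum_subtractf sum.distrib algebra_simps)
  also have "\<dots> = scal (- (\<Sum>k\<in>UNIV. b k k)) - P \<odot> F - scal p \<odot> (scal vv - F \<odot> F)"
    unfolding double_sum_gen[OF sym] e1 e2 ..
  also have "\<dots> = scal (- (\<Sum>k\<in>UNIV. b k k) - vv * p) - P \<odot> F + scal p \<odot> (F \<odot> F)"
    by (simp add: cmul_diff_right scal_mult scal_diff algebra_simps)
  also have "\<dots> = scal (lam\<^sup>2 * p) - (P - scal p \<odot> F) \<odot> F"
    unfolding sch by (simp add: cmul_diff_left cmul_assoc algebra_simps)
  finally show ?thesis unfolding P_def .
qed

lemma key_alg:
  assumes mm: "\<mu> \<odot> \<mu> = scal (lam\<^sup>2)" and anti: "F \<odot> \<mu> = - (\<mu> \<odot> F)" and lam: "lam \<noteq> 0"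
    and DX: "DXv = scal (lam\<^sup>2 * p) - X \<odot> F"
    and Xd: "X = P - scal p \<odot> F"
  shows "scal (1/2) \<odot> P + DXv \<odot> (scal (1 / (2 * lam\<^sup>2)) \<odot> \<mu>)
       = (scal (p/2) + X \<odot> (scal (1 / (2 * lam\<^sup>2)) \<odot> \<mu>)) \<odot> (F + \<mu>)"
proof -
  define c where "c = 1 / (2 * lam\<^sup>2)"
  define m where "m = scal c \<odot> \<mu>"
  have mF: "m \<odot> F = - (F \<odot> m)"
    unfolding m_def by (simp add: cmul_assoc scal_pull anti cmul_minus_right)
  have mmu: "m \<odot> \<mu> = scal (1/2)"
    unfolding m_def using lam by (simp add: cmul_assoc mm scal_mult c_def power2_eq_square)
  have X2: "X \<odot> scal (1/2) = scal (1/2) \<odot> P - scal (p/2) \<odot> F"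
    unfolding Xd by (simp add: scal_comm[symmetric] cmul_diff_right scal_scal)
  have L: "scal (lam\<^sup>2 * p) \<odot> m = scal (p/2) \<odot> \<mu>"
    unfolding m_def using lam by (simp add: scal_scal c_def power2_eq_square)
  have "(scal (p/2) + X \<odot> m) \<odot> (F + \<mu>)
      = scal (p/2) \<odot> F + X \<odot> (m \<odot> F) + scal (p/2) \<odot> \<mu> + X \<odot> (m \<odot> \<mu>)"
    by (simp add: cmul_add_left cmul_add_right cmul_assoc algebra_simps)
  also have "\<dots> = scal (p/2) \<odot> F - X \<odot> (F \<odot> m) + scal (p/2) \<odot> \<mu> + (scal (1/2) \<odot> P - scal (p/2) \<odot> F)"
    unfolding mF mmu X2 by (simp add: cmul_minus_right)
  also have "\<dots> = scal (1/2) \<odot> P + DXv \<odot> m"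
    using L unfolding DX by (simp add: cmul_diff_left cmul_assoc algebra_simps)
  finally show ?thesis unfolding m_def c_def ..
qed

lemma key:
  fixes \<phi> :: "(real, 'n::{finite,linorder}) vec \<Rightarrow> complex" and f :: "(real, 'n) vec \<Rightarrow> 'n cliff"
  assumes "open \<Omega>" "x \<in> \<Omega>" and lam: "lam \<noteq> 0"
    and h\<phi>: "\<forall>y\<in>\<Omega>. \<phi> differentiable at y \<and> (\<forall>j. pd j \<phi> differentiable at y)"
    and hf: "f differentiable at x"
    and ric: "dirac f x + f x \<odot> f x = scal vv"
    and sch: "- laplacian \<phi> x - vv * \<phi> x = lam\<^sup>2 * \<phi> x"
    and mm: "\<mu> \<odot> \<mu> = scal (lam\<^sup>2)" and anti: "f x \<odot> \<mu> = - (\<mu> \<odot> f x)"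
  defines "G \<equiv> (\<lambda>y. scal (\<phi> y / 2) + ((\<Sum>j\<in>UNIV. gen j \<odot> scal (pd j \<phi> y)) - scal (\<phi> y) \<odot> f y) \<odot> (scal (1 / (2 * lam\<^sup>2)) \<odot> \<mu>))"
  shows "G differentiable at x \<and> dirac G x - G x \<odot> (f x + \<mu>) = 0"
proof -
  define m where "m = scal (1 / (2 * lam\<^sup>2)) \<odot> \<mu>"
  define D\<phi> where "D\<phi> = frechet_derivative \<phi> (at x)"
  define D\<psi> where "D\<psi> j = frechet_derivative (pd j \<phi>) (at x)" for j
  define Df where "Df = frechet_derivative f (at x)"
  have d\<phi>: "(\<phi> has_derivative D\<phi>) (at x)"
    using h\<phi> assms(2) unfolding D\<phi>_def frechet_derivative_works by blast
  have d\<psi>: "(pd j \<phi> has_derivative D\<psi> j) (at x)" for j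
    using h\<phi> assms(2) unfolding D\<psi>_def frechet_derivative_works by blast
  have df: "(f has_derivative Df) (at x)"
    using hf unfolding Df_def frechet_derivative_works by blast
  define G' where "G' h = scal (D\<phi> h / 2) + ((\<Sum>j\<in>UNIV. gen j \<odot> scal (D\<psi> j h))
      - (scal (D\<phi> h) \<odot> f x + scal (\<phi> x) \<odot> Df h)) \<odot> m" for h
  have dsc: "((\<lambda>y. scal (g y)) has_derivative (\<lambda>h. scal (g' h))) (at x)"
    if "(g has_derivative g') (at x)" for g g'
    using bounded_linear.has_derivative[OF bl_scal that] .
  have dlc: "((\<lambda>y. c \<odot> F y) has_derivative (\<lambda>h. c \<odot> F' h)) (at x)"
    if "(F has_derivative F') (at x)" for c F F'
    using bounded_linear.has_derivative[OF bounded_bilinear.bounded_linear_right[OF bb_cmul] that] .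
  have drc: "((\<lambda>y. F y \<odot> c) has_derivative (\<lambda>h. F' h \<odot> c)) (at x)"
    if "(F has_derivative F') (at x)" for c F F'
    using bounded_linear.has_derivative[OF bounded_bilinear.bounded_linear_left[OF bb_cmul] that] .
  have dprod: "((\<lambda>y. F y \<odot> H y) has_derivative (\<lambda>h. F x \<odot> H' h + F' h \<odot> H x)) (at x)"
    if "(F has_derivative F') (at x)" "(H has_derivative H') (at x)" for F F' H H'
    using bounded_bilinear.FDERIV[OF bb_cmul that] .
  have dP: "((\<lambda>y. \<Sum>j\<in>UNIV. gen j \<odot> scal (pd j \<phi> y)) has_derivative (\<lambda>h. \<Sum>j\<in>UNIV. gen j \<odot> scal (D\<psi> j h))) (at x)"
    by (intro has_derivative_sum dlc dsc d\<psi>)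
  have dX: "((\<lambda>y. (\<Sum>j\<in>UNIV. gen j \<odot> scal (pd j \<phi> y)) - scal (\<phi> y) \<odot> f y) has_derivative
      (\<lambda>h. (\<Sum>j\<in>UNIV. gen j \<odot> scal (D\<psi> j h)) - (scal (D\<phi> h) \<odot> f x + scal (\<phi> x) \<odot> Df h))) (at x)"
  proof -
    have "((\<lambda>y. (\<Sum>j\<in>UNIV. gen j \<odot> scal (pd j \<phi> y)) - scal (\<phi> y) \<odot> f y) has_derivative
      (\<lambda>h. (\<Sum>j\<in>UNIV. gen j \<odot> scal (D\<psi> j h)) - (scal (\<phi> x) \<odot> Df h + scal (D\<phi> h) \<odot> f x))) (at x)"
      by (intro has_derivative_diff dP dprod[OF dsc[OF d\<phi>] df])
    then show ?thesis by (simp add: add.commute)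
  qed
  have dhalf: "((\<lambda>y. \<phi> y / 2) has_derivative (\<lambda>h. D\<phi> h / 2)) (at x)"
    by (auto intro!: derivative_eq_intros d\<phi>)
  have dG: "(G has_derivative G') (at x)"
    unfolding G_def G'_def m_def[symmetric]
    by (intro has_derivative_add dsc dhalf drc dX)
  define b where "b k j = pd k (pd j \<phi>) x" for k j
  define a where "a k = pd k \<phi> x" for k
  define P where "P = (\<Sum>j\<in>UNIV. gen j \<odot> scal (a j))"
  define X where "X = P - scal (\<phi> x) \<odot> f x"
  have sym: "b k j = b j k" for k j
    unfolding b_def using pd_swap[OF assms(1,2)] h\<phi> assms(2) by blast
  have pdG: "pd k G x = scal (a k / 2) + ((\<Sum>j\<in>UNIV. gen j \<odot> scal (b k j))
      - (scal (a k) \<odot> f x + scal (\<phi> x) \<odot> pd k f x)) \<odot> m" for k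
    unfolding pd_def frechet_derivative_at[OF dG, symmetric] G'_def D\<phi>_def D\<psi>_def Df_def a_def b_def pd_def ..
  have DXv: "(\<Sum>k\<in>UNIV. gen k \<odot> ((\<Sum>j\<in>UNIV. gen j \<odot> scal (b k j)) - (scal (a k) \<odot> f x + scal (\<phi> x) \<odot> pd k f x)))
       = scal (lam\<^sup>2 * \<phi> x) - X \<odot> f x"
    unfolding X_def P_def
  proof (rule DX_alg[OF sym])
    show "(\<Sum>k\<in>UNIV. gen k \<odot> pd k f x) + f x \<odot> f x = scal vv" using ric unfolding dirac_def .
    show "- (\<Sum>k\<in>UNIV. b k k) - vv * \<phi> x = lam\<^sup>2 * \<phi> x" using sch unfolding laplacian_def b_def .
  qed
  have half: "(\<Sum>k\<in>UNIV. gen k \<odot> scal (a k / 2)) = scal (1/2) \<odot> P"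
  proof -
    have "gen k \<odot> scal (a k / 2) = scal (1/2) \<odot> (gen k \<odot> scal (a k))" for k
    proof -
      have e: "scal (a k / 2) = scal (1/2) \<odot> scal (a k)" by (simp add: scal_mult)
      show ?thesis unfolding e by (rule scal_pull)
    qed
    then show ?thesis unfolding P_def by (simp add: cmul_sum_right)
  qed
  have "dirac G x = (\<Sum>k\<in>UNIV. gen k \<odot> scal (a k / 2))
      + (\<Sum>k\<in>UNIV. gen k \<odot> ((\<Sum>j\<in>UNIV. gen j \<odot> scal (b k j)) - (scal (a k) \<odot> f x + scal (\<phi> x) \<odot> pd k f x))) \<odot> m"
    unfolding dirac_def pdG by (simp add: cmul_add_right sum.distrib cmul_sum_left cmul_assoc)
  also have "\<dots> = scal (1/2) \<odot> P + (scal (lam\<^sup>2 * \<phi> x) - X \<odot> f x) \<odot> m"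
    unfolding half DXv ..
  also have "\<dots> = (scal (\<phi> x / 2) + X \<odot> m) \<odot> (f x + \<mu>)"
    unfolding m_def by (rule key_alg[OF mm anti lam refl X_def])
  also have "\<dots> = G x \<odot> (f x + \<mu>)"
    unfolding G_def X_def P_def a_def m_def ..
  finally show ?thesis using dG by (auto simp: differentiable_def)
qed

lemma pd_diff:
  assumes "F differentiable at x" "H differentiable at x"
  shows "pd j (\<lambda>y. F y - H y) x = pd j F x - pd j H x"
proof -
  have "((\<lambda>y. F y - H y) has_derivative (\<lambda>h. frechet_derivative F (at x) h - frechet_derivative H (at x) h)) (at x)"
    using assms by (intro has_derivative_diff) (simp_all add: frechet_derivative_works[symmetric])
  then show ?thesis unfolding pd_def by (simp add: frechet_derivative_at[symmetric])
qed

lemma pd_local: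
  assumes "open \<Omega>" "x \<in> \<Omega>" "\<forall>y\<in>\<Omega>. F y = H y" "F differentiable at x"
  shows "pd j F x = pd j H x"
proof -
  have dF: "(F has_derivative frechet_derivative F (at x)) (at x)"
    using assms(4) frechet_derivative_works by blast
  have "(H has_derivative frechet_derivative F (at x)) (at x)"
    by (rule has_derivative_transform_within_open[OF dF assms(1,2)]) (use assms(3) in auto)
  then show ?thesis unfolding pd_def by (simp add: frechet_derivative_at[symmetric])
qed

lemma dirac_diff: "dirac g x - dirac g' x = (\<Sum>j\<in>UNIV. gen j \<odot> (pd j g x - pd j g' x))"
  unfolding dirac_def by (simp add: cmul_diff_right sum_subtractf)

theorem corollary7p1:
  fixes \<Omega> :: "(real, 'n::{finite,linorder}) vec set"
    and v :: "(real, 'n) vec \<Rightarrow> complex"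
    and lam :: complex
    and f :: "(real, 'n) vec \<Rightarrow> 'n cliff"
    and \<phi> :: "(real, 'n) vec \<Rightarrow> complex"
  assumes "even CARD('n)" and "odd (CARD('n) div 2)"
    and "open \<Omega>"
    and "lam \<noteq> 0"
    and "\<forall>x\<in>\<Omega>. is_vector (f x)"
    and "\<forall>x\<in>\<Omega>. f differentiable at x"
    and "\<forall>x\<in>\<Omega>. dirac f x + f x \<odot> f x = scal (v x)"
    and "\<forall>x\<in>\<Omega>. \<phi> differentiable at x \<and> (\<forall>j. pd j \<phi> differentiable at x)"
    and "\<forall>x\<in>\<Omega>. - laplacian \<phi> x - v x * \<phi> x = lam\<^sup>2 * \<phi> x"
  shows "(\<exists>g h :: (real, 'n) vec \<Rightarrow> 'n cliff.
            (\<forall>x\<in>\<Omega>. g differentiable at x \<and> h differentiable at x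
               \<and> scal (\<phi> x) = g x + h x
               \<and> dirac g x - g x \<odot> (f x + scal (lam * \<i>) \<odot> eN) = 0
               \<and> dirac h x - h x \<odot> (f x - scal (lam * \<i>) \<odot> eN) = 0))
       \<and> (\<forall>g h g' h' :: (real, 'n) vec \<Rightarrow> 'n cliff.
            (\<forall>x\<in>\<Omega>. g differentiable at x \<and> h differentiable at x
               \<and> scal (\<phi> x) = g x + h x
               \<and> dirac g x - g x \<odot> (f x + scal (lam * \<i>) \<odot> eN) = 0
               \<and> dirac h x - h x \<odot> (f x - scal (lam * \<i>) \<odot> eN) = 0)
          \<and> (\<forall>x\<in>\<Omega>. g' differentiable at x \<and> h' differentiable at x
               \<and> scal (\<phi> x) = g' x + h' x
               \<and> dirac g' x - g' x \<odot> (f x + scal (lam * \<i>) \<odot> eN) = 0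
               \<and> dirac h' x - h' x \<odot> (f x - scal (lam * \<i>) \<odot> eN) = 0)
          \<longrightarrow> (\<forall>x\<in>\<Omega>. g x = g' x \<and> h x = h' x))"
proof -
  define \<mu> :: "'n cliff" where "\<mu> = scal (lam * \<i>) \<odot> eN"
  have mm: "\<mu> \<odot> \<mu> = scal (lam\<^sup>2)"
  proof -
    have "\<mu> \<odot> \<mu> = scal (lam * \<i>) \<odot> (scal (lam * \<i>) \<odot> (eN \<odot> eN))"
      unfolding \<mu>_def cmul_assoc scal_pull[of eN] ..
    also have "\<dots> = scal (lam\<^sup>2)"
      unfolding eN_eN sgnf_UNIV_UNIV[OF assms(1,2)] scal_scal scal_mult
      by (simp add: power2_eq_square algebra_simps)
    finally show ?thesis .
  qed
  have anti: "f x \<odot> \<mu> = - (\<mu> \<odot> f x)" if "x \<in> \<Omega>" for x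
    unfolding \<mu>_def using vector_eN_anti[OF assms(1)] assms(5) that
    by (simp add: scal_pull[of "f x"] cmul_assoc cmul_minus_right)
  have mm': "(-\<mu>) \<odot> (-\<mu>) = scal (lam\<^sup>2)" using mm by (simp add: cmul_minus_left cmul_minus_right)
  have anti': "f x \<odot> (-\<mu>) = - ((-\<mu>) \<odot> f x)" if "x \<in> \<Omega>" for x
    using anti[OF that] by (simp add: cmul_minus_left cmul_minus_right)
  define g where "g y = scal (\<phi> y / 2) + ((\<Sum>j\<in>UNIV. gen j \<odot> scal (pd j \<phi> y)) - scal (\<phi> y) \<odot> f y) \<odot> (scal (1 / (2 * lam\<^sup>2)) \<odot> \<mu>)" for y
  define h where "h y = scal (\<phi> y / 2) + ((\<Sum>j\<in>UNIV. gen j \<odot> scal (pd j \<phi> y)) - scal (\<phi> y) \<odot> f y) \<odot> (scal (1 / (2 * lam\<^sup>2)) \<odot> (-\<mu>))" for y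
  have kg: "g differentiable at x \<and> dirac g x - g x \<odot> (f x + \<mu>) = 0" if "x \<in> \<Omega>" for x
    unfolding g_def
    by (rule key[OF assms(3) that assms(4) assms(8)]) (use assms(6,7,9) that mm anti in auto)
  have kh: "h differentiable at x \<and> dirac h x - h x \<odot> (f x + (-\<mu>)) = 0" if "x \<in> \<Omega>" for x
    unfolding h_def
    by (rule key[OF assms(3) that assms(4) assms(8)]) (use assms(6,7,9) that mm' anti' in auto)
  have sum: "scal (\<phi> x) = g x + h x" for x
  proof -
    have "scal (\<phi> x) = scal (\<phi> x / 2) + scal (\<phi> x / 2)" by (simp add: scal_add[symmetric])
    then show ?thesis unfolding g_def h_def by (simp add: cmul_minus_right)
  qed
  have ex: "\<exists>g h :: (real, 'n) vec \<Rightarrow> 'n cliff.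
            (\<forall>x\<in>\<Omega>. g differentiable at x \<and> h differentiable at x
               \<and> scal (\<phi> x) = g x + h x
               \<and> dirac g x - g x \<odot> (f x + scal (lam * \<i>) \<odot> eN) = 0
               \<and> dirac h x - h x \<odot> (f x - scal (lam * \<i>) \<odot> eN) = 0)"
    using kg kh sum unfolding \<mu>_def by (intro exI[of _ g] exI[of _ h]) auto
  have uq: "g1 x = g2 x \<and> h1 x = h2 x"
    if A: "\<forall>x\<in>\<Omega>. g1 differentiable at x \<and> h1 differentiable at x
               \<and> scal (\<phi> x) = g1 x + h1 x
               \<and> dirac g1 x - g1 x \<odot> (f x + \<mu>) = 0
               \<and> dirac h1 x - h1 x \<odot> (f x - \<mu>) = 0"
    and B: "\<forall>x\<in>\<Omega>. g2 differentiable at x \<and> h2 differentiable at x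
               \<and> scal (\<phi> x) = g2 x + h2 x
               \<and> dirac g2 x - g2 x \<odot> (f x + \<mu>) = 0
               \<and> dirac h2 x - h2 x \<odot> (f x - \<mu>) = 0"
    and x: "x \<in> \<Omega>" for g1 h1 g2 h2 x
  proof -
    have loc: "\<forall>y\<in>\<Omega>. h1 y - h2 y = g2 y - g1 y"
    proof
      fix y assume "y \<in> \<Omega>"
      then have "g1 y + h1 y = g2 y + h2 y" using A B by metis
      then show "h1 y - h2 y = g2 y - g1 y" by (simp add: algebra_simps)
    qed
    have pdh: "pd j h1 x - pd j h2 x = pd j g2 x - pd j g1 x" for j
    proof -
      have "pd j h1 x - pd j h2 x = pd j (\<lambda>y. h1 y - h2 y) x"
        using A B x by (simp add: pd_diff)
      also have "\<dots> = pd j (\<lambda>y. g2 y - g1 y) x"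
        using loc A B x by (intro pd_local[OF assms(3) x]) (auto intro: differentiable_diff)
      also have "\<dots> = pd j g2 x - pd j g1 x"
        using A B x by (simp add: pd_diff)
      finally show ?thesis .
    qed
    define D where "D = g1 x - g2 x"
    have hD: "h1 x - h2 x = - D"
      using loc x unfolding D_def by simp
    have e1: "dirac g1 x - dirac g2 x = D \<odot> (f x + \<mu>)"
      using A B x unfolding D_def by (simp add: cmul_diff_left)
    have e2: "dirac h1 x - dirac h2 x = - D \<odot> (f x - \<mu>)"
    proof -
      have "dirac h1 x - dirac h2 x = (h1 x - h2 x) \<odot> (f x - \<mu>)"
        using A B x by (simp add: cmul_diff_left)
      then show ?thesis unfolding hD .
    qed
    have "dirac h1 x - dirac h2 x = - (dirac g1 x - dirac g2 x)"
      unfolding dirac_diff pdh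
      by (simp add: cmul_diff_right sum_subtractf)
    then have "- D \<odot> (f x - \<mu>) = - (D \<odot> (f x + \<mu>))" using e1 e2 by simp
    then have "D \<odot> \<mu> + D \<odot> \<mu> = 0"
      by (simp add: cmul_minus_left cmul_diff_right cmul_add_right algebra_simps)
    then have "(2::real) *\<^sub>R (D \<odot> \<mu>) = 0" by (simp add: scaleR_2)
    then have Dm: "D \<odot> \<mu> = 0" by simp
    have "D = D \<odot> ((\<mu> \<odot> \<mu>) \<odot> scal (1 / lam\<^sup>2))"
      using assms(4) by (simp add: mm scal_mult scal_one_right)
    also have "\<dots> = 0" by (simp add: cmul_assoc[symmetric] Dm cmul_zero_left)
    finally have "D = 0" .
    then have g: "g1 x = g2 x" unfolding D_def by simp
    moreover have "h1 x = h2 x" using hD \<open>D = 0\<close> by simp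
    ultimately show ?thesis by simp
  qed
  show ?thesis
    using ex uq unfolding \<mu>_def[symmetric] by blast
qed

end
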